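(* Let $C_{t-1}\in\mathbb{R}^{d\times d}$ be symmetric positive semidefinite, $A_t\in\mathbb{R}^{d'\times d}$, and $Q_t\in\mathbb{R}^{d'\times d'}$ symmetric with $Q_t\succeq q_{\min}I$ for some $q_{\min}>0$. Let $P_t=A_tC_{t-1}A_t^\top+Q_t$ and let $P_{t-1}\in\mathbb{R}^{d\times d}$ be symmetric positive definite. Assume $A_t^\top A_t\preceq a_{\max}I$ and $P_{t-1}\preceq p_{\max}I$, and that $\gamma=\frac{a_{\max}p_{\max}}{q_{\min}}<1$. Then, with $M_t=P_t^{-1}$ and $M_{t-1}=P_{t-1}^{-1}$, $$A_t^\top M_tA_t\preceq\gamma M_{t-1}.$$
   Context: $\preceq$ denotes the Loewner order on symmetric matrices. This gives a sufficient condition for the contraction assumption $A_t^\top M_tA_t\preceq\gamma M_{t-1}$ with $\gamma\in[0,1)$ used in the tracking analysis of a recursive Gaussian discrepancy update whose pre-update covariance is propagated as $P_t=A_tC_{t-1}A_t^\top+Q_t$ (covariance inflation $Q_t$). *)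

theory Defs
  imports "HOL-Analysis.Analysis"
begin

definition sym_mat :: "real^'n^'n \<Rightarrow> bool" where
  "sym_mat A \<longleftrightarrow> transpose A = A"

definition psd :: "real^'n^'n \<Rightarrow> bool" where
  "psd A \<longleftrightarrow> sym_mat A \<and> (\<forall>x. 0 \<le> x \<bullet> (A *v x))"

definition pd :: "real^'n^'n \<Rightarrow> bool" where
  "pd A \<longleftrightarrow> sym_mat A \<and> (\<forall>x. x \<noteq> 0 \<longrightarrow> 0 < x \<bullet> (A *v x))"

definition loewner_le :: "real^'n^'n \<Rightarrow> real^'n^'n \<Rightarrow> bool" (infix "\<preceq>\<^sub>L" 50) where
  "A \<preceq>\<^sub>L B \<longleftrightarrow> sym_mat A \<and> sym_mat B \<and> psd (B - A)"

end

theory Submission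
  imports Defs
begin

lemma inv_props:
  fixes P :: "real^'n^'n"
  assumes "invertible P"
  shows "P ** matrix_inv P = mat 1 \<and> matrix_inv P ** P = mat 1"
  using assms unfolding invertible_def matrix_inv_def by (rule someI_ex)

lemma inv_sym:
  fixes P :: "real^'n^'n"
  assumes "sym_mat P" "invertible P"
  shows "sym_mat (matrix_inv P)"
proof -
  let ?M = "matrix_inv P"
  have 1: "P ** ?M = mat 1" "?M ** P = mat 1" using inv_props[OF assms(2)] by auto
  have "transpose ?M ** transpose P = mat 1"
    by (metis 1(1) matrix_transpose_mul transpose_mat)
  hence 2: "transpose ?M ** P = mat 1" using assms(1) by (simp add: sym_mat_def)
  have "transpose ?M = transpose ?M ** (P ** ?M)" using 1 by simp
  also have "\<dots> = ?M" by (simp add: matrix_mul_assoc 2)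
  finally show ?thesis by (simp add: sym_mat_def)
qed

lemma qf_transpose:
  fixes A :: "real^'n^'m"
  shows "x \<bullet> (A *v y) = (transpose A *v x) \<bullet> y"
  by (metis dot_lmul_matrix transpose_matrix_vector transpose_transpose)

lemma qf_sym:
  fixes S :: "real^'n^'n"
  assumes "sym_mat S"
  shows "x \<bullet> (S *v y) = (S *v x) \<bullet> y"
  using qf_transpose[of x S y] assms unfolding sym_mat_def by metis

lemma inv_apply:
  fixes P :: "real^'n^'n"
  assumes "invertible P"
  shows "P *v (matrix_inv P *v x) = x"
  using inv_props[OF assms] by (simp add: matrix_vector_mul_assoc)

lemma invertible_of_pos:
  fixes P :: "real^'n^'n"
  assumes "\<And>y. y \<noteq> 0 \<Longrightarrow> 0 < y \<bullet> (P *v y)"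
  shows "invertible P"
proof -
  have "\<forall>y. P *v y = 0 \<longrightarrow> y = 0"
    using assms by (metis inner_zero_right less_irrefl)
  thus ?thesis unfolding invertible_left_inverse matrix_left_invertible_ker .
qed

lemma upper_inv:
  fixes P :: "real^'n^'n"
  assumes "sym_mat P" "invertible P" "q > 0" "\<And>y. q * (y \<bullet> y) \<le> y \<bullet> (P *v y)"
  shows "x \<bullet> (matrix_inv P *v x) \<le> (x \<bullet> x) / q"
proof -
  define y where "y = matrix_inv P *v x"
  have Py: "P *v y = x" unfolding y_def by (rule inv_apply[OF assms(2)])
  have e: "x \<bullet> y = y \<bullet> (P *v y)" using Py by (simp add: inner_commute)
  have a: "q * (norm y)^2 \<le> x \<bullet> y" using assms(4)[of y] e by (simp add: power2_norm_eq_inner)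
  have b: "x \<bullet> y \<le> norm x * norm y" by (rule norm_cauchy_schwarz)
  have c: "q * norm y \<le> norm x"
  proof (cases "norm y = 0")
    case True thus ?thesis by simp
  next
    case False
    hence "norm y > 0" by simp
    moreover have "(q * norm y) * norm y \<le> norm x * norm y" using a b by (simp add: power2_eq_square mult.assoc)
    ultimately show ?thesis by simp
  qed
  have "x \<bullet> y \<le> norm x * norm y" by (rule b)
  also have "\<dots> \<le> norm x * (norm x / q)"
    using c assms(3) by (intro mult_left_mono) (auto simp: field_simps)
  also have "\<dots> = (x \<bullet> x) / q" by (simp add: power2_norm_eq_inner[symmetric] power2_eq_square)
  finally show ?thesis unfolding y_def .
qed

lemma lower_inv:
  fixes P :: "real^'n^'n"
  assumes "sym_mat P" "invertible P" "p > 0" "\<And>y. 0 \<le> y \<bullet> (P *v y)"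
    "\<And>y. y \<bullet> (P *v y) \<le> p * (y \<bullet> y)"
  shows "(x \<bullet> x) / p \<le> x \<bullet> (matrix_inv P *v x)"
proof -
  define y where "y = matrix_inv P *v x"
  have Py: "P *v y = x" unfolding y_def by (rule inv_apply[OF assms(2)])
  define w where "w = (1/p) *\<^sub>R x"
  have "0 \<le> (w - y) \<bullet> (P *v (w - y))" by (rule assms(4))
  also have "\<dots> = w \<bullet> (P *v w) - 2 * (w \<bullet> x) + y \<bullet> x"
  proof -
    have s: "y \<bullet> (P *v w) = w \<bullet> x"
      using qf_sym[OF assms(1), of y w] Py by (simp add: inner_commute)
    show ?thesis
      by (simp add: matrix_vector_mult_diff_distrib inner_diff_left inner_diff_right Py s inner_commute)
  qed
  finally have 1: "2 * (w \<bullet> x) - w \<bullet> (P *v w) \<le> y \<bullet> x" by simp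
  have 2: "w \<bullet> (P *v w) \<le> p * (w \<bullet> w)" by (rule assms(5))
  have 3: "w \<bullet> x = (x \<bullet> x) / p" "w \<bullet> w = (x \<bullet> x) / p^2" unfolding w_def
    by (auto simp: power2_eq_square)
  have "(x \<bullet> x) / p = 2 * ((x \<bullet> x) / p) - p * ((x \<bullet> x) / p^2)"
    using assms(3) by (simp add: power2_eq_square field_simps)
  also have "\<dots> \<le> y \<bullet> x" using 1 2 3 by simp
  finally show ?thesis unfolding y_def by (simp add: inner_commute)
qed


lemma transpose_add': "transpose ((X::real^'n^'m) + Y) = transpose X + transpose Y"
  by (simp add: transpose_def vec_eq_iff)

lemma transpose_diff': "transpose ((X::real^'n^'m) - Y) = transpose X - transpose Y"
  by (simp add: transpose_def vec_eq_iff)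

lemma loewner_qf:
  fixes X Y :: "real^'n^'n"
  assumes "X \<preceq>\<^sub>L Y"
  shows "x \<bullet> (X *v x) \<le> x \<bullet> (Y *v x)"
proof -
  have "0 \<le> x \<bullet> ((Y - X) *v x)" using assms unfolding loewner_le_def psd_def by blast
  thus ?thesis by (simp add: matrix_vector_mult_diff_rdistrib inner_diff_right)
qed

lemma mat1_qf: "x \<bullet> ((c *\<^sub>R mat 1) *v x) = c * (x \<bullet> (x::real^'n))"
  by (simp add: scaleR_matrix_vector_assoc[symmetric])

lemma loewner_up:
  fixes X :: "real^'n^'n"
  assumes "X \<preceq>\<^sub>L c *\<^sub>R mat 1"
  shows "x \<bullet> (X *v x) \<le> c * (x \<bullet> x)"
  using loewner_qf[OF assms, of x] unfolding mat1_qf .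

lemma loewner_low:
  fixes X :: "real^'n^'n"
  assumes "c *\<^sub>R mat 1 \<preceq>\<^sub>L X"
  shows "c * (x \<bullet> x) \<le> x \<bullet> (X *v x)"
  using loewner_qf[OF assms, of x] unfolding mat1_qf .

lemma quad_assoc:
  fixes A :: "real^'d^'e" and C :: "real^'d^'d"
  shows "y \<bullet> ((A ** C ** transpose A) *v y) = (transpose A *v y) \<bullet> (C *v (transpose A *v y))"
proof -
  have "(A ** C ** transpose A) *v y = A *v (C *v (transpose A *v y))"
    by (simp only: matrix_vector_mul_assoc matrix_mul_assoc)
  thus ?thesis using qf_transpose[of y A "C *v (transpose A *v y)"] by (simp only:)
qed

lemma quad_assoc2:
  fixes A :: "real^'d^'e" and M :: "real^'e^'e"
  shows "x \<bullet> ((transpose A ** M ** A) *v x) = (A *v x) \<bullet> (M *v (A *v x))"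
proof -
  have "(transpose A ** M ** A) *v x = transpose A *v (M *v (A *v x))"
    by (simp only: matrix_vector_mul_assoc matrix_mul_assoc)
  thus ?thesis using qf_transpose[of x "transpose A" "M *v (A *v x)"] by (simp only: transpose_transpose)
qed

theorem proposition6:
  fixes C_prev :: "real^'d^'d" and A :: "real^'d^'e" and Q :: "real^'e^'e"
    and P_prev :: "real^'d^'d" and q_min a_max p_max :: real
  assumes "psd C_prev"
    and "sym_mat Q" and "q_min > 0" and "q_min *\<^sub>R mat 1 \<preceq>\<^sub>L Q"
    and "pd P_prev"
    and "transpose A ** A \<preceq>\<^sub>L a_max *\<^sub>R mat 1"
    and "P_prev \<preceq>\<^sub>L p_max *\<^sub>R mat 1"
    and "a_max * p_max / q_min < 1"
  shows "transpose A ** matrix_inv (A ** C_prev ** transpose A + Q) ** A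
           \<preceq>\<^sub>L (a_max * p_max / q_min) *\<^sub>R matrix_inv P_prev"
proof -
  define P where "P = A ** C_prev ** transpose A + Q"
  define M where "M = matrix_inv P"
  define N where "N = matrix_inv P_prev"
  define g where "g = a_max * p_max / q_min"
  have symC: "transpose C_prev = C_prev" using assms(1) unfolding psd_def sym_mat_def by blast
  have symQ: "transpose Q = Q" using assms(2) unfolding sym_mat_def by blast
  have symP: "sym_mat P" unfolding P_def sym_mat_def
    by (simp add: transpose_add' matrix_transpose_mul symC symQ matrix_mul_assoc)
  have Qlow: "q_min * (y \<bullet> y) \<le> y \<bullet> (Q *v y)" for y
    by (rule loewner_low[OF assms(4)])
  have Plow: "q_min * (y \<bullet> y) \<le> y \<bullet> (P *v y)" for y
  proof -
    have "0 \<le> y \<bullet> ((A ** C_prev ** transpose A) *v y)"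
      unfolding quad_assoc using assms(1) unfolding psd_def by blast
    thus ?thesis using Qlow[of y] unfolding P_def
      by (simp add: matrix_vector_mult_add_rdistrib inner_add_right)
  qed
  have invP: "invertible P"
  proof (rule invertible_of_pos)
    fix y :: "real^'e" assume "y \<noteq> 0"
    hence "0 < y \<bullet> y" by simp
    hence "0 < q_min * (y \<bullet> y)" using assms(3) by simp
    thus "0 < y \<bullet> (P *v y)" using Plow[of y] by linarith
  qed
  have symPp: "sym_mat P_prev" and posPp: "\<And>y. y \<noteq> 0 \<Longrightarrow> 0 < y \<bullet> (P_prev *v y)"
    using assms(5) unfolding pd_def by auto
  have nnPp: "0 \<le> y \<bullet> (P_prev *v y)" for y
    using posPp[of y] by (cases "y = 0") auto
  have invPp: "invertible P_prev" by (rule invertible_of_pos[OF posPp])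
  have Ppup: "y \<bullet> (P_prev *v y) \<le> p_max * (y \<bullet> y)" for y
    by (rule loewner_up[OF assms(7)])
  have Aup: "(A *v y) \<bullet> (A *v y) \<le> a_max * (y \<bullet> y)" for y
  proof -
    have "y \<bullet> ((transpose A ** A) *v y) = (A *v y) \<bullet> (A *v y)"
      using quad_assoc2[where A=A and M="mat 1" and x=y] by simp
    thus ?thesis using loewner_up[OF assms(6), of y] by simp
  qed
  define e :: "real^'d" where "e = axis undefined 1"
  have e1: "e \<bullet> e = 1" unfolding e_def by simp
  have "e \<noteq> 0" using e1 by auto
  have pp: "p_max > 0" using posPp[OF \<open>e \<noteq> 0\<close>] Ppup[of e] e1 by simp
  have ap: "a_max \<ge> 0" proof -
    have "0 \<le> (A *v e) \<bullet> (A *v e)" by (rule inner_ge_zero)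
    moreover have "(A *v e) \<bullet> (A *v e) \<le> a_max" using Aup[of e] e1 by simp
    ultimately show ?thesis by linarith
  qed
  have g0: "g \<ge> 0" unfolding g_def using ap pp assms(3) by simp
  have symM: "sym_mat M" unfolding M_def by (rule inv_sym[OF symP invP])
  have symN: "sym_mat N" unfolding N_def by (rule inv_sym[OF symPp invPp])
  have symL: "sym_mat (transpose A ** M ** A)"
    using symM unfolding sym_mat_def by (simp add: matrix_transpose_mul matrix_mul_assoc)
  have symR: "sym_mat (g *\<^sub>R N)"
    using symN unfolding sym_mat_def by (simp add: transpose_scalar)
  have qf: "x \<bullet> ((transpose A ** M ** A) *v x) \<le> x \<bullet> ((g *\<^sub>R N) *v x)" for x
  proof -
    have "x \<bullet> ((transpose A ** M ** A) *v x) = (A *v x) \<bullet> (M *v (A *v x))" by (rule quad_assoc2)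
    also have "\<dots> \<le> ((A *v x) \<bullet> (A *v x)) / q_min"
      unfolding M_def by (rule upper_inv[OF symP invP assms(3) Plow])
    also have "\<dots> \<le> a_max * (x \<bullet> x) / q_min"
      using Aup[of x] assms(3) by (simp add: divide_right_mono)
    also have "\<dots> = g * ((x \<bullet> x) / p_max)" unfolding g_def using pp by simp
    also have "\<dots> \<le> g * (x \<bullet> (N *v x))"
      unfolding N_def using g0 lower_inv[OF symPp invPp pp nnPp Ppup, of x]
      by (rule mult_left_mono[rotated])
    also have "\<dots> = x \<bullet> ((g *\<^sub>R N) *v x)"
      by (simp add: scaleR_matrix_vector_assoc[symmetric])
    finally show ?thesis .
  qed
  have "psd (g *\<^sub>R N - transpose A ** M ** A)"
    unfolding psd_def
  proof
    show "sym_mat (g *\<^sub>R N - transpose A ** M ** A)"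
      using symL symR unfolding sym_mat_def transpose_diff' by simp
    show "\<forall>x. 0 \<le> x \<bullet> ((g *\<^sub>R N - transpose A ** M ** A) *v x)"
      using qf by (simp add: matrix_vector_mult_diff_rdistrib inner_diff_right)
  qed
  hence "transpose A ** M ** A \<preceq>\<^sub>L g *\<^sub>R N"
    unfolding loewner_le_def using symL symR by (intro conjI)
  thus ?thesis unfolding M_def N_def P_def g_def .
qed

end
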